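(* The topology on $\underline{\mathcal{X}}$ induced by $d_{\underline{\mathcal{X}}}$ is strictly finer than the subspace topology induced by the product topology on $\mathcal{X}^{\mathbb{Z}_-}$ if and only if $(\mathcal{X},d_{\mathcal{X}})$ is unbounded. In particular, if $\mathcal{X}$ is compact, then so is $\underline{\mathcal{X}}$.
   Context: $\mathbb{Z}_-=\{\dots,-2,-1\}$. $(\mathcal{X},d_{\mathcal{X}})$ is a Polish space with a complete metric. $\mathbf{w}=(w_t)_{t\le-1}\subseteq(0,1)$ is a monotone sequence with $\sum_{t\le-1}w_t=1$ and $\sup_{n\ge1}(\sup_{t\le-1}w_t/w_{t-n})^{1/n}<\infty$. Fix $x_*\in\mathcal{X}$. $\underline{\mathcal{X}}$ is the set of $\mathbf{x}\in\mathcal{X}^{\mathbb{Z}_-}$ with $\sum_{t\le-1}w_td_{\mathcal{X}}(x_t,x_* )<\infty$, equipped with the metric $d_{\underline{\mathcal{X}}}(\mathbf{x}^1,\mathbf{x}^2)=\sum_{t\le-1}w_td_{\mathcal{X}}(x^1_t,x^2_t)$. *)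

theory Defs
  imports "HOL-Analysis.Analysis"
begin

abbreviation Zneg :: "int set" where "Zneg \<equiv> {..-1}"

definition weight_seq :: "(int \<Rightarrow> real) \<Rightarrow> bool" where
  "weight_seq w \<longleftrightarrow>
     (\<forall>t\<in>Zneg. 0 < w t \<and> w t < 1)
   \<and> (mono_on Zneg w \<or> antimono_on Zneg w)
   \<and> (w has_sum 1) Zneg
   \<and> (\<exists>C. \<forall>n::nat. n \<ge> 1 \<longrightarrow> (\<forall>t\<in>Zneg. root n (w t / w (t - int n)) \<le> C))"

definition seq_space :: "(int \<Rightarrow> real) \<Rightarrow> 'a::metric_space \<Rightarrow> (int \<Rightarrow> 'a) set" where
  "seq_space w xs = {x \<in> PiE Zneg (\<lambda>_. UNIV). (\<lambda>t. w t * dist (x t) xs) summable_on Zneg}"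

definition seq_dist :: "(int \<Rightarrow> real) \<Rightarrow> (int \<Rightarrow> 'a::metric_space) \<Rightarrow> (int \<Rightarrow> 'a) \<Rightarrow> real" where
  "seq_dist w x y = (\<Sum>\<^sub>\<infinity>t\<in>Zneg. w t * dist (x t) (y t))"

definition seq_topology :: "(int \<Rightarrow> real) \<Rightarrow> 'a::metric_space \<Rightarrow> (int \<Rightarrow> 'a) topology" where
  "seq_topology w xs = Metric_space.mtopology (seq_space w xs) (seq_dist w)"

definition seq_prod_topology :: "(int \<Rightarrow> real) \<Rightarrow> 'a::metric_space \<Rightarrow> (int \<Rightarrow> 'a) topology" where
  "seq_prod_topology w xs = subtopology (product_topology (\<lambda>_. euclidean) Zneg) (seq_space w xs)"

definition finer_topology :: "'b topology \<Rightarrow> 'b topology \<Rightarrow> bool" where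
  "finer_topology T1 T2 \<longleftrightarrow> topspace T1 = topspace T2 \<and> (\<forall>U. openin T2 U \<longrightarrow> openin T1 U)"

definition strictly_finer_topology :: "'b topology \<Rightarrow> 'b topology \<Rightarrow> bool" where
  "strictly_finer_topology T1 T2 \<longleftrightarrow> finer_topology T1 T2 \<and> T1 \<noteq> T2"

end

theory Submission
  imports Defs
begin

lemma w_props:
  assumes "weight_seq w"
  shows "\<And>t. t \<in> Zneg \<Longrightarrow> 0 < w t" "\<And>t. t \<in> Zneg \<Longrightarrow> w t < 1"
    "w summable_on Zneg" "infsum w Zneg = 1"
  using assms unfolding weight_seq_def
  by (auto simp: summable_on_def infsumI)

lemma term_nonneg:
  assumes "weight_seq w" "t \<in> Zneg"
  shows "0 \<le> w t * dist a b"
  using w_props(1)[OF assms] by simp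

lemma sd_summable:
  assumes "weight_seq w" "x \<in> seq_space w xs" "y \<in> seq_space w xs"
  shows "(\<lambda>t. w t * dist (x t) (y t)) summable_on Zneg"
proof -
  have "(\<lambda>t. w t * dist (x t) xs + w t * dist (y t) xs) summable_on Zneg"
    using assms by (intro summable_on_add) (auto simp: seq_space_def)
  then show ?thesis
  proof (rule summable_on_comparison_test)
    fix t assume t: "t \<in> Zneg"
    have "dist (x t) (y t) \<le> dist (x t) xs + dist (y t) xs"
      using dist_triangle[of "x t" "y t" xs] by (simp add: dist_commute)
    then show "w t * dist (x t) (y t) \<le> w t * dist (x t) xs + w t * dist (y t) xs"
      using w_props(1)[OF assms(1) t]
      by (metis distrib_left less_eq_real_def mult_left_mono)
    show "0 \<le> w t * dist (x t) (y t)" using w_props(1)[OF assms(1) t] by simp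
  qed
qed

lemma sd_ge:
  assumes "weight_seq w" "x \<in> seq_space w xs" "y \<in> seq_space w xs" "t \<in> Zneg"
  shows "w t * dist (x t) (y t) \<le> seq_dist w x y"
proof -
  have "sum (\<lambda>t. w t * dist (x t) (y t)) {t} \<le> infsum (\<lambda>t. w t * dist (x t) (y t)) Zneg"
    using assms term_nonneg[OF assms(1)]
    by (intro finite_sum_le_infsum sd_summable) auto
  then show ?thesis by (simp add: seq_dist_def)
qed

lemma sd_nonneg:
  assumes "weight_seq w"
  shows "0 \<le> seq_dist w x y"
  unfolding seq_dist_def using term_nonneg[OF assms]
  by (intro infsum_nonneg) auto

lemma seq_metric:
  assumes "weight_seq w"
  shows "Metric_space (seq_space w xs) (seq_dist w)"
proof
  fix x y :: "int \<Rightarrow> 'a"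
  show "0 \<le> seq_dist w x y" by (rule sd_nonneg[OF assms])
  show "seq_dist w x y = seq_dist w y x"
    unfolding seq_dist_def by (simp add: dist_commute)
next
  fix x y :: "int \<Rightarrow> 'a"
  assume x: "x \<in> seq_space w xs" and y: "y \<in> seq_space w xs"
  show "seq_dist w x y = 0 \<longleftrightarrow> x = y"
  proof
    assume 0: "seq_dist w x y = 0"
    show "x = y"
    proof
      fix t
      show "x t = y t"
      proof (cases "t \<in> Zneg")
        case True
        have "w t * dist (x t) (y t) \<le> 0" using sd_ge[OF assms x y True] 0 by simp
        then show ?thesis using w_props(1)[OF assms True]
          by (simp add: mult_le_0_iff)
      next
        case False
        then show ?thesis using x y by (auto simp: seq_space_def PiE_def extensional_def)
      qed
    qed
  next
    assume "x = y" then show "seq_dist w x y = 0" by (simp add: seq_dist_def)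
  qed
next
  fix x y z :: "int \<Rightarrow> 'a"
  assume x: "x \<in> seq_space w xs" and y: "y \<in> seq_space w xs" and z: "z \<in> seq_space w xs"
  have "seq_dist w x z \<le> infsum (\<lambda>t. w t * dist (x t) (y t) + w t * dist (y t) (z t)) Zneg"
    unfolding seq_dist_def
  proof (rule infsum_mono)
    show "(\<lambda>t. w t * dist (x t) (z t)) summable_on Zneg" by (rule sd_summable[OF assms x z])
    show "(\<lambda>t. w t * dist (x t) (y t) + w t * dist (y t) (z t)) summable_on Zneg"
      by (intro summable_on_add sd_summable[OF assms x y] sd_summable[OF assms y z])
    fix t assume t: "t \<in> Zneg"
    show "w t * dist (x t) (z t) \<le> w t * dist (x t) (y t) + w t * dist (y t) (z t)"
      using w_props(1)[OF assms t] dist_triangle[of "x t" "z t" "y t"]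
      by (metis distrib_left less_eq_real_def mult_left_mono)
  qed
  also have "\<dots> = seq_dist w x y + seq_dist w y z"
    unfolding seq_dist_def
    by (intro infsum_add sd_summable[OF assms x y] sd_summable[OF assms y z])
  finally show "seq_dist w x z \<le> seq_dist w x y + seq_dist w y z" .
qed

lemma seq_space_sub: "seq_space w xs \<subseteq> PiE Zneg (\<lambda>_. UNIV)"
  by (auto simp: seq_space_def)

lemma finer:
  fixes xs :: "'a::metric_space"
  assumes "weight_seq w"
  shows "finer_topology (seq_topology w xs) (seq_prod_topology w xs)"
proof -
  interpret M: Metric_space "seq_space w xs" "seq_dist w" by (rule seq_metric[OF assms])
  have top: "topspace (seq_topology w xs) = topspace (seq_prod_topology w xs)"
    using seq_space_sub[of w xs]
    by (auto simp: seq_topology_def seq_prod_topology_def topspace_subtopology)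
  have "openin (seq_topology w xs) U" if U: "openin (seq_prod_topology w xs) U" for U
  proof -
    obtain T where T: "openin (product_topology (\<lambda>_. euclidean) Zneg) T"
      and UT: "U = T \<inter> seq_space w xs"
      using U by (auto simp: seq_prod_topology_def openin_subtopology)
    show ?thesis
      unfolding seq_topology_def M.openin_mtopology
    proof (intro conjI allI impI)
      show "U \<subseteq> seq_space w xs" using UT by auto
      fix x assume xU: "x \<in> U"
      then have xT: "x \<in> T" and xS: "x \<in> seq_space w xs" using UT by auto
      obtain V where Vfin: "finite {i \<in> Zneg. V i \<noteq> UNIV}"
        and Vopen: "\<forall>i\<in>Zneg. open (V i)" and xV: "x \<in> PiE Zneg V" and VT: "PiE Zneg V \<subseteq> T"
        using T xT unfolding openin_product_topology_alt by force
      define K where "K = {i \<in> Zneg. V i \<noteq> UNIV}"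
      have "\<forall>i\<in>K. \<exists>r>0. ball (x i) r \<subseteq> V i"
        using Vopen xV unfolding K_def by (auto simp: open_contains_ball PiE_iff)
      then obtain rr where rr: "\<And>i. i \<in> K \<Longrightarrow> rr i > 0 \<and> ball (x i) (rr i) \<subseteq> V i"
        by metis
      define r where "r = Min (insert 1 ((\<lambda>i. w i * rr i) ` K))"
      have finK: "finite K" using Vfin K_def by simp
      have rpos: "r > 0" unfolding r_def using finK rr w_props(1)[OF assms] K_def
        by (subst Min_gr_iff) auto
      have rle: "r \<le> w i * rr i" if "i \<in> K" for i
        unfolding r_def using finK that by (intro Min_le) auto
      show "\<exists>r>0. M.mball x r \<subseteq> U"
      proof (intro exI conjI)
        show "r > 0" by (rule rpos)
        show "M.mball x r \<subseteq> U"
        proof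
          fix y assume "y \<in> M.mball x r"
          then have yS: "y \<in> seq_space w xs" and d: "seq_dist w x y < r" by auto
          have "y \<in> PiE Zneg V"
          proof -
            have "y i \<in> V i" if i: "i \<in> Zneg" for i
            proof (cases "i \<in> K")
              case True
              have "w i * dist (x i) (y i) < w i * rr i"
                using sd_ge[OF assms xS yS i] d rle[OF True] by linarith
              then have "dist (x i) (y i) < rr i" using w_props(1)[OF assms i] by simp
              then show ?thesis using rr[OF True] by auto
            next
              case False then show ?thesis using i K_def by auto
            qed
            moreover have "y \<in> extensional Zneg" using yS by (auto simp: seq_space_def PiE_def)
            ultimately show ?thesis by (auto simp: PiE_iff)
          qed
          then show "y \<in> U" using VT UT yS by auto
        qed
      qed
    qed
  qed
  then show ?thesis using top by (auto simp: finer_topology_def)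
qed

lemma tail_small:
  assumes "weight_seq w" "\<epsilon> > 0"
  obtains F where "finite F" "F \<subseteq> Zneg" "infsum w (Zneg - F) \<le> \<epsilon>" "sum w F \<le> 1"
    "w summable_on (Zneg - F)"
proof -
  obtain F where F: "finite F" "F \<subseteq> Zneg" "dist (sum w F) (infsum w Zneg) \<le> \<epsilon>"
    using infsum_finite_approximation[OF w_props(3)[OF assms(1)] assms(2)] by blast
  have sF: "w summable_on F" using F by simp
  have eq: "infsum w (Zneg - F) = 1 - sum w F"
    using infsum_Diff[OF w_props(3)[OF assms(1)] sF F(2)] w_props(4)[OF assms(1)] F by simp
  have "sum w F \<le> infsum w Zneg"
    using w_props(1)[OF assms(1)] F
    by (intro finite_sum_le_infsum w_props(3)[OF assms(1)]) (auto intro: less_imp_le)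
  then have le1: "sum w F \<le> 1" using w_props(4)[OF assms(1)] by simp
  have "infsum w (Zneg - F) \<le> \<epsilon>"
    using eq F(3) w_props(4)[OF assms(1)] by (simp add: dist_real_def)
  moreover have "w summable_on (Zneg - F)"
    using summable_on_Diff[OF w_props(3)[OF assms(1)] sF F(2)] .
  ultimately show ?thesis using that F le1 by blast
qed

lemma bounded_case:
  fixes xs :: "'a::metric_space"
  assumes "weight_seq w" "bounded (UNIV :: 'a set)"
  shows "seq_space w xs = PiE Zneg (\<lambda>_. UNIV)"
    and "seq_topology w xs = product_topology (\<lambda>_. euclidean) Zneg"
proof -
  obtain e where e: "\<And>y. dist xs y \<le> e"
    using assms(2) bounded_any_center[of UNIV xs] by auto
  have e0: "e \<ge> 0" using e[of xs] by simp
  have wsum: "w summable_on Zneg" by (rule w_props(3)[OF assms(1)])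
  have ge: "w t * dist a b \<le> 2 * e * w t" if t: "t \<in> Zneg" for t and a b :: 'a
  proof -
    have "dist a b \<le> 2 * e" using dist_triangle[of a b xs] e[of a] e[of b]
      by (simp add: dist_commute)
    then show ?thesis using w_props(1)[OF assms(1) t]
      by (metis mult.commute mult_left_mono less_imp_le)
  qed
  show S: "seq_space w xs = PiE Zneg (\<lambda>_. UNIV)"
  proof
    show "seq_space w xs \<subseteq> PiE Zneg (\<lambda>_. UNIV)" by (rule seq_space_sub)
    show "PiE Zneg (\<lambda>_. UNIV) \<subseteq> seq_space w xs"
    proof
      fix x :: "int \<Rightarrow> 'a" assume x: "x \<in> PiE Zneg (\<lambda>_. UNIV)"
      have "(\<lambda>t. w t * dist (x t) xs) summable_on Zneg"
        using summable_on_cmult_right[OF wsum, of "2*e"]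
        by (rule summable_on_comparison_test) (use ge term_nonneg[OF assms(1)] in auto)
      then show "x \<in> seq_space w xs" using x by (simp add: seq_space_def)
    qed
  qed
  interpret M: Metric_space "seq_space w xs" "seq_dist w" by (rule seq_metric[OF assms(1)])
  have P: "seq_prod_topology w xs = product_topology (\<lambda>_. euclidean) Zneg"
  proof -
    have "topspace (product_topology (\<lambda>_::int. euclidean) Zneg) = PiE Zneg (\<lambda>_. (UNIV::'a set))" by simp
    then have "subtopology (product_topology (\<lambda>_::int. euclidean) Zneg) (PiE Zneg (\<lambda>_. (UNIV::'a set)))
       = product_topology (\<lambda>_. euclidean) Zneg"
      by (metis subtopology_topspace)
    then show ?thesis unfolding seq_prod_topology_def S .
  qed
  have fin: "openin (product_topology (\<lambda>_. euclidean) Zneg) U \<Longrightarrow> openin (seq_topology w xs) U" for U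
    using finer[OF assms(1), of xs] P by (auto simp: finer_topology_def)
  have "openin (product_topology (\<lambda>_. euclidean) Zneg) U" if U: "openin (seq_topology w xs) U" for U
    unfolding openin_product_topology_alt
  proof
    fix x assume xU: "x \<in> U"
    have US: "U \<subseteq> seq_space w xs" using U by (simp add: seq_topology_def M.openin_mtopology)
    obtain r where r: "r > 0" "M.mball x r \<subseteq> U"
      using U xU by (auto simp: seq_topology_def M.openin_mtopology)
    have xS: "x \<in> seq_space w xs" using xU US by auto
    define \<epsilon> where "\<epsilon> = r / (4 * (e + 1))"
    have \<epsilon>0: "\<epsilon> > 0" using r e0 by (simp add: \<epsilon>_def)
    obtain F where F: "finite F" "F \<subseteq> Zneg" "infsum w (Zneg - F) \<le> \<epsilon>" "sum w F \<le> 1"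
      "w summable_on (Zneg - F)"
      using tail_small[OF assms(1) \<epsilon>0] by blast
    define V where "V i = (if i \<in> F then ball (x i) (r/2) else UNIV)" for i
    show "\<exists>V. finite {i \<in> Zneg. V i \<noteq> topspace euclidean} \<and> (\<forall>i\<in>Zneg. openin euclidean (V i))
            \<and> x \<in> PiE Zneg V \<and> PiE Zneg V \<subseteq> U"
    proof (intro exI conjI)
      show "finite {i \<in> Zneg. V i \<noteq> topspace euclidean}"
        by (rule finite_subset[OF _ F(1)]) (auto simp: V_def)
      show "\<forall>i\<in>Zneg. openin euclidean (V i)" by (auto simp: V_def)
      show "x \<in> PiE Zneg V" using xS r(1) S by (auto simp: V_def PiE_iff)
      show "PiE Zneg V \<subseteq> U"
      proof
        fix y assume yV: "y \<in> PiE Zneg V"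
        then have yS: "y \<in> seq_space w xs" using S by (auto simp: PiE_iff)
        define g where "g t = w t * dist (x t) (y t)" for t
        have gs: "g summable_on Zneg" unfolding g_def by (rule sd_summable[OF assms(1) xS yS])
        have gF: "g summable_on F" using F by simp
        have split: "infsum g Zneg = sum g F + infsum g (Zneg - F)"
          using infsum_Diff[OF gs gF F(2)] F(1) by simp
        have "sum g F \<le> sum (\<lambda>i. (r/2) * w i) F"
        proof (rule sum_mono)
          fix i assume i: "i \<in> F"
          then have "y i \<in> V i" using yV F(2) by (auto simp: PiE_iff)
          then have "dist (x i) (y i) < r/2" using i by (simp add: V_def)
          then show "g i \<le> (r/2) * w i" unfolding g_def using w_props(1)[OF assms(1)] i F(2)
            by (metis less_imp_le mult.commute mult_left_mono subsetD)
        qed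
        also have "\<dots> = (r/2) * sum w F" by (simp add: sum_distrib_left)
        also have "\<dots> \<le> r/2" using F(4) r(1) by (simp add: mult_left_le)
        finally have A: "sum g F \<le> r/2" .
        have "infsum g (Zneg - F) \<le> infsum (\<lambda>t. 2 * e * w t) (Zneg - F)"
          by (rule infsum_mono) (use summable_on_Diff[OF gs gF F(2)] summable_on_cmult_right[OF F(5)]
               ge in \<open>auto simp: g_def\<close>)
        also have "\<dots> = 2 * e * infsum w (Zneg - F)" by (rule infsum_cmult_right')
        also have "\<dots> \<le> 2 * e * \<epsilon>" using F(3) e0 by (simp add: mult_left_mono)
        also have "\<dots> < r/2" using e0 r(1) by (simp add: \<epsilon>_def field_simps)
        finally have B: "infsum g (Zneg - F) < r/2" .
        have "seq_dist w x y < r" using A B split by (simp add: seq_dist_def g_def[abs_def])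
        then show "y \<in> U" using r(2) xS yS by auto
      qed
    qed
  qed
  then show "seq_topology w xs = product_topology (\<lambda>_. euclidean) Zneg"
    using fin by (auto simp: topology_eq)
qed

lemma bounded_P:
  fixes xs :: "'a::metric_space"
  assumes "weight_seq w" "bounded (UNIV :: 'a set)"
  shows "seq_prod_topology w xs = product_topology (\<lambda>_. euclidean) Zneg"
proof -
  have S: "seq_space w xs = PiE Zneg (\<lambda>_. UNIV)" by (rule bounded_case(1)[OF assms])
  have "topspace (product_topology (\<lambda>_::int. euclidean) Zneg) = PiE Zneg (\<lambda>_. (UNIV::'a set))" by simp
  then have "subtopology (product_topology (\<lambda>_::int. euclidean) Zneg) (PiE Zneg (\<lambda>_. (UNIV::'a set)))
     = product_topology (\<lambda>_. euclidean) Zneg"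
    by (metis subtopology_topspace)
  then show ?thesis unfolding seq_prod_topology_def S .
qed

lemma unbounded_case:
  fixes xs :: "'a::metric_space"
  assumes "weight_seq w" "\<not> bounded (UNIV :: 'a set)"
  shows "seq_topology w xs \<noteq> seq_prod_topology w xs"
proof
  assume eq: "seq_topology w xs = seq_prod_topology w xs"
  interpret M: Metric_space "seq_space w xs" "seq_dist w" by (rule seq_metric[OF assms(1)])
  define x0 where "x0 = (\<lambda>t::int. if t \<in> Zneg then xs else undefined)"
  have "(\<lambda>t. w t * dist (x0 t) xs) summable_on Zneg \<longleftrightarrow> (\<lambda>t. 0::real) summable_on Zneg"
    by (intro summable_on_cong) (simp add: x0_def)
  then have x0S: "x0 \<in> seq_space w xs" by (simp add: seq_space_def x0_def PiE_iff extensional_def)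
  have "openin (seq_prod_topology w xs) (M.mball x0 1)"
    using eq[symmetric] by (simp add: seq_topology_def)
  then obtain T where T: "openin (product_topology (\<lambda>_. euclidean) Zneg) T"
    and UT: "M.mball x0 1 = T \<inter> seq_space w xs"
    by (auto simp: seq_prod_topology_def openin_subtopology)
  have "x0 \<in> T" using UT x0S by (metis IntE M.centre_in_mball_iff zero_less_one)
  then obtain V where Vfin: "finite {i \<in> Zneg. V i \<noteq> UNIV}"
    and xV: "x0 \<in> PiE Zneg V" and VT: "PiE Zneg V \<subseteq> T"
    using T unfolding openin_product_topology_alt by force
  define K where "K = {i \<in> Zneg. V i \<noteq> UNIV}"
  have "\<not> Zneg \<subseteq> K"
  proof
    assume "Zneg \<subseteq> K"
    then have "finite Zneg" using finite_subset Vfin unfolding K_def by blast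
    then show False using infinite_Iic by blast
  qed
  then obtain t where t0: "t \<in> Zneg" "t \<notin> K" by blast
  then have t: "t \<in> Zneg" "V t = UNIV" unfolding K_def by auto
  have wt: "w t > 0" by (rule w_props(1)[OF assms(1) t(1)])
  obtain a where a: "dist xs a > 2 / w t"
  proof -
    have "\<not> (\<exists>e. \<forall>y\<in>UNIV. dist xs y \<le> e)" using assms(2) bounded_any_center by blast
    then obtain a where "\<not> dist xs a \<le> 2 / w t" by blast
    then show ?thesis using that[of a] by simp
  qed
  define y where "y = x0(t := a)"
  have yV: "y \<in> PiE Zneg V" using xV t by (auto simp: y_def PiE_iff extensional_def x0_def)
  have "(\<lambda>s. w s * dist (y s) xs) summable_on Zneg \<longleftrightarrow> (\<lambda>s. w s * dist (y s) xs) summable_on {t}"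
    using t(1) by (intro summable_on_cong_neutral) (auto simp: y_def x0_def)
  then have yS: "y \<in> seq_space w xs" using yV by (simp add: seq_space_def PiE_iff)
  have "y \<in> M.mball x0 1" using UT yS yV VT by auto
  then have "seq_dist w x0 y < 1" by simp
  moreover have "w t * dist (x0 t) (y t) \<le> seq_dist w x0 y" by (rule sd_ge[OF assms(1) x0S yS t(1)])
  moreover have "w t * dist (x0 t) (y t) > 2"
  proof -
    have "dist (x0 t) (y t) = dist xs a" using t by (simp add: x0_def y_def)
    then show ?thesis using a wt by (simp add: field_simps)
  qed
  ultimately show False by linarith
qed

theorem lemmaB1:
  fixes w :: "int \<Rightarrow> real" and xs :: "'a::polish_space"
  assumes "weight_seq w"
  shows "(strictly_finer_topology (seq_topology w xs) (seq_prod_topology w xs)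
            \<longleftrightarrow> \<not> bounded (UNIV :: 'a set))
       \<and> (compact (UNIV :: 'a set) \<longrightarrow> compact_space (seq_topology w xs))"
proof (intro conjI impI iffI)
  assume "strictly_finer_topology (seq_topology w xs) (seq_prod_topology w xs)"
  then show "\<not> bounded (UNIV :: 'a set)"
    using bounded_case(2)[OF assms, of xs] bounded_P[OF assms, of xs]
    by (auto simp: strictly_finer_topology_def)
next
  assume nb: "\<not> bounded (UNIV :: 'a set)"
  show "strictly_finer_topology (seq_topology w xs) (seq_prod_topology w xs)"
    using unbounded_case[OF assms nb, of xs] finer[OF assms, of xs]
    by (simp add: strictly_finer_topology_def)
next
  assume c: "compact (UNIV :: 'a set)"
  then have b: "bounded (UNIV :: 'a set)" by (rule compact_imp_bounded)
  have "compact_space (euclidean :: 'a topology)" using c by (simp add: compact_space_def)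
  then show "compact_space (seq_topology w xs)"
    unfolding bounded_case(2)[OF assms b] by (simp add: compact_space_product_topology)
qed

end
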